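(* Let $\mathfrak{g}$ be a finite-dimensional Leibniz algebra, $\mathfrak{b}$ a two-sided ideal of $\mathfrak{g}$, and $\mathfrak{a}\cong\mathfrak{g}/\mathfrak{b}$. Then $$\dim\mathcal{M}^{\mathrm{Lie}}(\mathfrak{a})\le\dim\mathcal{M}^{\mathrm{Lie}}(\mathfrak{g})+\dim\big([\mathfrak{g},\mathfrak{g}]_{\mathrm{Lie}}\cap\mathfrak{b}\big).$$
   Context: Fix a field $\mathbb{K}$ with $\frac12\in\mathbb{K}$. A Leibniz algebra is a $\mathbb{K}$-vector space with a bilinear bracket satisfying $[x,[y,z]]=[[x,y],z]-[[x,z],y]$. For two-sided ideals $\mathfrak{m},\mathfrak{n}$, $[\mathfrak{m},\mathfrak{n}]_{\mathrm{Lie}}$ is the subspace spanned by all $[m,n]+[n,m]$, $m\in\mathfrak{m},n\in\mathfrak{n}$. For a Leibniz algebra $\mathfrak{g}$ with a free presentation $0\to\mathfrak{r}\to\mathfrak{f}\to\mathfrak{g}\to0$ ($\mathfrak{f}$ a free Leibniz algebra), the Schur $\mathrm{Lie}$-multiplier is $\mathcal{M}^{\mathrm{Lie}}(\mathfrak{g})=\frac{\mathfrak{r}\cap[\mathfrak{f},\mathfrak{f}]_{\mathrm{Lie}}}{[\mathfrak{f},\mathfrak{r}]_{\mathrm{Lie}}}$, independent of the presentation up to isomorphism. *)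

theory Defs
  imports Main "HOL-Library.Function_Algebras" "HOL-Library.Extended_Nat"
begin

definition leibniz_algebra ::
  "('k::field \<Rightarrow> 'g::ab_group_add \<Rightarrow> 'g) \<Rightarrow> ('g \<Rightarrow> 'g \<Rightarrow> 'g) \<Rightarrow> bool" where
  "leibniz_algebra sc br \<longleftrightarrow>
     vector_space sc \<and>
     (\<forall>x y z. br (x + y) z = br x z + br y z) \<and>
     (\<forall>x y z. br x (y + z) = br x y + br x z) \<and>
     (\<forall>a x y. br (sc a x) y = sc a (br x y)) \<and>
     (\<forall>a x y. br x (sc a y) = sc a (br x y)) \<and>
     (\<forall>x y z. br x (br y z) = br (br x y) z - br (br x z) y)"

definition finite_dim :: "('k::field \<Rightarrow> 'g::ab_group_add \<Rightarrow> 'g) \<Rightarrow> bool" where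
  "finite_dim sc \<longleftrightarrow> (\<exists>B. finite B \<and> module.span sc B = UNIV)"

definition two_sided_ideal ::
  "('k::field \<Rightarrow> 'g::ab_group_add \<Rightarrow> 'g) \<Rightarrow> ('g \<Rightarrow> 'g \<Rightarrow> 'g) \<Rightarrow> 'g set \<Rightarrow> bool" where
  "two_sided_ideal sc br I \<longleftrightarrow> module.subspace sc I \<and>
     (\<forall>x\<in>I. \<forall>y. br x y \<in> I \<and> br y x \<in> I)"

definition leibniz_hom ::
  "('k::field \<Rightarrow> 'g::ab_group_add \<Rightarrow> 'g) \<Rightarrow> ('g \<Rightarrow> 'g \<Rightarrow> 'g) \<Rightarrow>
   ('k \<Rightarrow> 'h::ab_group_add \<Rightarrow> 'h) \<Rightarrow> ('h \<Rightarrow> 'h \<Rightarrow> 'h) \<Rightarrow> ('g \<Rightarrow> 'h) \<Rightarrow> bool" where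
  "leibniz_hom sc br sc' br' f \<longleftrightarrow> Vector_Spaces.linear sc sc' f \<and> (\<forall>x y. f (br x y) = br' (f x) (f y))"

definition lie_comm ::
  "('k::field \<Rightarrow> 'g::ab_group_add \<Rightarrow> 'g) \<Rightarrow> ('g \<Rightarrow> 'g \<Rightarrow> 'g) \<Rightarrow> 'g set \<Rightarrow> 'g set \<Rightarrow> 'g set" where
  "lie_comm sc br M N = module.span sc {br m n + br n m | m n. m \<in> M \<and> n \<in> N}"

text \<open>Dimension of the quotient space U/W (W \<subseteq> U subspaces), as an extended natural
  number: the least size of a finite B \<subseteq> U whose images span U/W (infinity if none).
  In particular qdim sc U {0} is dim U.\<close>
definition qdim :: "('k::field \<Rightarrow> 'g::ab_group_add \<Rightarrow> 'g) \<Rightarrow> 'g set \<Rightarrow> 'g set \<Rightarrow> enat" where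
  "qdim sc U W = Inf {enat (card B) | B. finite B \<and> B \<subseteq> U \<and> U \<subseteq> module.span sc (B \<union> W)}"

section \<open>The free Leibniz algebra (Loday): reduced tensor algebra on letters of type 'x\<close>

text \<open>A word is stored REVERSED: the list [xn,...,x1] represents x1 \<otimes> ... \<otimes> xn,
  i.e. the left-normed bracket [[...[x1,x2],...],xn].\<close>

definition free_carrier :: "('x list \<Rightarrow> 'k::field) set" where
  "free_carrier = {c. finite {w. c w \<noteq> 0} \<and> c [] = 0}"

definition fscale :: "'k::field \<Rightarrow> ('x list \<Rightarrow> 'k) \<Rightarrow> ('x list \<Rightarrow> 'k)" where
  "fscale a c = (\<lambda>w. a * c w)"

definition app_letter :: "'x \<Rightarrow> ('x list \<Rightarrow> 'k::field) \<Rightarrow> ('x list \<Rightarrow> 'k)" where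
  "app_letter v c = (\<lambda>w. case w of [] \<Rightarrow> 0 | v' # w' \<Rightarrow> if v' = v then c w' else 0)"

text \<open>Bracket of basis words: [u,v] = u\<otimes>v, [u, y\<otimes>v] = [u,y]\<otimes>v - [u\<otimes>v, y].\<close>
fun wbr :: "'x list \<Rightarrow> 'x list \<Rightarrow> ('x list \<Rightarrow> 'k::field)" where
  "wbr u [] = 0"
| "wbr u [v] = (\<lambda>w. if w = v # u then 1 else 0)"
| "wbr u (v # y # w) = app_letter v (wbr u (y # w)) - wbr (v # u) (y # w)"

definition fbr :: "('x list \<Rightarrow> 'k::field) \<Rightarrow> ('x list \<Rightarrow> 'k) \<Rightarrow> ('x list \<Rightarrow> 'k)" where
  "fbr c d = (\<lambda>z. \<Sum>u\<in>{u. c u \<noteq> 0}. \<Sum>w\<in>{w. d w \<noteq> 0}. c u * d w * wbr u w z)"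

fun lnorm :: "('g::ab_group_add \<Rightarrow> 'g \<Rightarrow> 'g) \<Rightarrow> 'g list \<Rightarrow> 'g" where
  "lnorm br [] = 0"
| "lnorm br [x] = x"
| "lnorm br (x # y # w) = br (lnorm br (y # w)) x"

text \<open>Canonical free presentation of g: the free Leibniz algebra on the set of all elements
  of g, mapped onto g by the homomorphism extending the identity.\<close>
definition canon_proj ::
  "('k::field \<Rightarrow> 'g::ab_group_add \<Rightarrow> 'g) \<Rightarrow> ('g \<Rightarrow> 'g \<Rightarrow> 'g) \<Rightarrow> ('g list \<Rightarrow> 'k) \<Rightarrow> 'g" where
  "canon_proj sc br c = (\<Sum>w\<in>{w. c w \<noteq> 0}. sc (c w) (lnorm br w))"

definition canon_rel ::
  "('k::field \<Rightarrow> 'g::ab_group_add \<Rightarrow> 'g) \<Rightarrow> ('g \<Rightarrow> 'g \<Rightarrow> 'g) \<Rightarrow> ('g list \<Rightarrow> 'k) set" where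
  "canon_rel sc br = {c \<in> free_carrier. canon_proj sc br c = 0}"

text \<open>Schur Lie-multiplier dimension: dim ((r \<inter> [f,f]_Lie) / [f,r]_Lie).\<close>
definition schur_lie_dim ::
  "('k::field \<Rightarrow> 'g::ab_group_add \<Rightarrow> 'g) \<Rightarrow> ('g \<Rightarrow> 'g \<Rightarrow> 'g) \<Rightarrow> enat" where
  "schur_lie_dim sc br =
     qdim fscale
       (canon_rel sc br \<inter> lie_comm fscale fbr free_carrier free_carrier)
       (lie_comm fscale fbr free_carrier (canon_rel sc br))"

end

theory Submission
  imports Defs
begin


definition dl :: "'x list \<Rightarrow> 'x list \<Rightarrow> 'k::field" where
  "dl v = (\<lambda>z. if z = v then 1 else 0)"

definition lc :: "('k::field \<Rightarrow> 'v::ab_group_add \<Rightarrow> 'v) \<Rightarrow> ('x list \<Rightarrow> 'v) \<Rightarrow> ('x list \<Rightarrow> 'k) \<Rightarrow> 'v" where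
  "lc s K c = (\<Sum>w\<in>{w. c w \<noteq> 0}. s (c w) (K w))"

definition lin_on :: "('k \<Rightarrow> 'v::ab_group_add \<Rightarrow> 'v) \<Rightarrow> ('k \<Rightarrow> 'u::ab_group_add \<Rightarrow> 'u) \<Rightarrow> 'v set \<Rightarrow> ('v \<Rightarrow> 'u) \<Rightarrow> bool" where
  "lin_on s1 s2 S f \<longleftrightarrow> (\<forall>x\<in>S. \<forall>y\<in>S. f (x + y) = f x + f y) \<and> (\<forall>a. \<forall>x\<in>S. f (s1 a x) = s2 a (f x))"

lemma sum_apply_fun: "(sum f A) x = sum (\<lambda>a. f a x) A"
  by (induct A rule: infinite_finite_induct) auto

lemma vs_fscale: "vector_space (fscale :: 'k::field \<Rightarrow> ('x list \<Rightarrow> 'k) \<Rightarrow> _)"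
  by unfold_locales (auto simp: fscale_def fun_eq_iff algebra_simps)

lemma mod_fscale: "module (fscale :: 'k::field \<Rightarrow> ('x list \<Rightarrow> 'k) \<Rightarrow> _)"
  using vs_fscale module_iff_vector_space by blast

lemma sub_fc: "module.subspace (fscale :: 'k::field \<Rightarrow> ('x list \<Rightarrow> 'k) \<Rightarrow> _) free_carrier"
proof -
  have a: "{w. (c + d) w \<noteq> 0} \<subseteq> {w. c w \<noteq> 0} \<union> {w. d w \<noteq> 0}" for c d :: "'x list \<Rightarrow> 'k"
    by auto
  have b: "{w. fscale a c w \<noteq> 0} \<subseteq> {w. c w \<noteq> 0}" for a and c :: "'x list \<Rightarrow> 'k"
    by (auto simp: fscale_def)
  show ?thesis
    unfolding module.subspace_def[OF mod_fscale] free_carrier_def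
    using a b by (auto intro: finite_subset simp: fscale_def)
qed

lemma lin_on_zero: "lin_on s1 s2 S f \<Longrightarrow> module.subspace s1 S \<Longrightarrow> module s1 \<Longrightarrow> f 0 = 0"
  unfolding lin_on_def
  by (metis add.right_neutral add_left_cancel module.subspace_0)

lemma lin_on_diff: "lin_on s1 s2 S f \<Longrightarrow> module.subspace s1 S \<Longrightarrow> module s1 \<Longrightarrow> x \<in> S \<Longrightarrow> y \<in> S
   \<Longrightarrow> f (x - y) = f x - f y"
proof -
  assume l: "lin_on s1 s2 S f" and S: "module.subspace s1 S" and m: "module s1" and x: "x \<in> S" and y: "y \<in> S"
  have "x - y \<in> S" using module.subspace_diff[OF m S x y] .
  then have "f (x - y + y) = f (x - y) + f y" using l y unfolding lin_on_def by blast
  then show ?thesis by (simp add: algebra_simps)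
qed

lemma lin_on_sum:
  assumes m1: "module s1" and S: "module.subspace s1 S" and l: "lin_on s1 s2 S T"
    and x: "\<forall>a\<in>A. x a \<in> S"
  shows "T (\<Sum>a\<in>A. s1 (f a) (x a)) = (\<Sum>a\<in>A. s2 (f a) (T (x a)))"
  using x
proof (induct A rule: infinite_finite_induct)
  case (infinite A) then show ?case using lin_on_zero[OF l S m1] by simp
next
  case empty then show ?case using lin_on_zero[OF l S m1] by simp
next
  case (insert a A)
  have i1: "s1 (f a) (x a) \<in> S" using insert module.subspace_scale[OF m1 S] by auto
  have i2: "(\<Sum>a\<in>A. s1 (f a) (x a)) \<in> S"
    using insert by (intro module.subspace_sum[OF m1 S] module.subspace_scale[OF m1 S]) auto
  have "T (\<Sum>a\<in>insert a A. s1 (f a) (x a)) = T (s1 (f a) (x a) + (\<Sum>a\<in>A. s1 (f a) (x a)))"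
    using insert by simp
  also have "\<dots> = T (s1 (f a) (x a)) + T (\<Sum>a\<in>A. s1 (f a) (x a))"
    using l i1 i2 unfolding lin_on_def by blast
  also have "\<dots> = s2 (f a) (T (x a)) + (\<Sum>a\<in>A. s2 (f a) (T (x a)))"
    using insert l unfolding lin_on_def by auto
  finally show ?case using insert by simp
qed

lemma lc_superset:
  assumes m: "module s" and fin: "finite S" and sub: "{w. c w \<noteq> 0} \<subseteq> S"
  shows "lc s K c = (\<Sum>w\<in>S. s (c w) (K w))"
  unfolding lc_def
  by (rule sum.mono_neutral_left[OF fin sub]) (auto simp: module.scale_zero_left[OF m])

lemma lc_cong: "(\<And>w. c w \<noteq> 0 \<Longrightarrow> K w = K' w) \<Longrightarrow> lc s K c = lc s K' c"
  unfolding lc_def by (rule sum.cong) auto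

lemma lc_add:
  assumes m: "module s" and c: "c \<in> free_carrier" and d: "d \<in> free_carrier"
  shows "lc s K (c + d) = lc s K c + lc s K d"
proof -
  let ?S = "{w. c w \<noteq> 0} \<union> {w. d w \<noteq> 0}"
  have f: "finite ?S" using c d by (auto simp: free_carrier_def)
  have "lc s K (c + d) = (\<Sum>w\<in>?S. s ((c + d) w) (K w))"
    by (rule lc_superset[OF m f]) auto
  also have "\<dots> = (\<Sum>w\<in>?S. s (c w) (K w)) + (\<Sum>w\<in>?S. s (d w) (K w))"
    by (simp add: module.scale_left_distrib[OF m] sum.distrib)
  also have "\<dots> = lc s K c + lc s K d"
    using lc_superset[OF m f, of c K] lc_superset[OF m f, of d K] by auto
  finally show ?thesis .
qed

lemma lc_scale:
  assumes m: "module s" and c: "c \<in> free_carrier"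
  shows "lc s K (fscale a c) = s a (lc s K c)"
proof -
  let ?S = "{w. c w \<noteq> 0}"
  have f: "finite ?S" using c by (auto simp: free_carrier_def)
  have "lc s K (fscale a c) = (\<Sum>w\<in>?S. s (fscale a c w) (K w))"
    by (rule lc_superset[OF m f]) (auto simp: fscale_def)
  also have "\<dots> = s a (lc s K c)"
    unfolding lc_def fscale_def
    by (simp add: module.scale_sum_right[OF m] module.scale_scale[OF m])
  finally show ?thesis .
qed

lemma lin_on_lc: "module s \<Longrightarrow> lin_on fscale s free_carrier (lc s K)"
  unfolding lin_on_def using lc_add lc_scale by blast

lemma lc_dl: "module s \<Longrightarrow> lc s K (dl v) = K v"
proof -
  assume m: "module s"
  have "{w. dl v w \<noteq> (0::'k::field)} = {v}" by (auto simp: dl_def)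
  then show ?thesis unfolding lc_def by (simp add: dl_def module.scale_one[OF m])
qed

lemma lc_in:
  assumes m: "module s" and S: "module.subspace s S" and K: "\<And>w. c w \<noteq> 0 \<Longrightarrow> K w \<in> S"
  shows "lc s K c \<in> S"
  unfolding lc_def
  by (rule module.subspace_sum[OF m S]) (auto intro: module.subspace_scale[OF m S] K)

lemma lc_T:
  assumes m1: "module s1" and S: "module.subspace s1 S" and l: "lin_on s1 s2 S T"
    and K: "\<And>w. c w \<noteq> 0 \<Longrightarrow> K w \<in> S"
  shows "T (lc s1 K c) = lc s2 (\<lambda>w. T (K w)) c"
  unfolding lc_def by (rule lin_on_sum[OF m1 S l]) (auto intro: K)



lemma wbr_supp: "wbr u w z \<noteq> (0::'k::field) \<Longrightarrow> length z = length u + length w \<and> set z \<subseteq> set u \<union> set w"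
proof (induct u w arbitrary: z rule: wbr.induct)
  case (1 u) then show ?case by simp
next
  case (2 u v) then show ?case by (auto split: if_splits)
next
  case (3 u v y w)
  have e: "(wbr u (v # y # w) z::'k) = app_letter v (wbr u (y # w)) z - wbr (v # u) (y # w) z"
    by simp
  have "app_letter v (wbr u (y # w)) z \<noteq> (0::'k) \<or> wbr (v # u) (y # w) z \<noteq> (0::'k)"
  proof (rule ccontr)
    assume "\<not> (app_letter v (wbr u (y # w)) z \<noteq> (0::'k) \<or> wbr (v # u) (y # w) z \<noteq> (0::'k))"
    then have "app_letter v (wbr u (y # w)) z = (0::'k)" "wbr (v # u) (y # w) z = (0::'k)" by auto
    with 3(3) e show False by simp
  qed
  then show ?case
  proof
    assume h: "app_letter v (wbr u (y # w)) z \<noteq> (0::'k)"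
    then obtain z' where z: "z = v # z'" and "wbr u (y # w) z' \<noteq> (0::'k)"
      by (auto simp: app_letter_def split: list.splits if_splits)
    with 3(1) show ?thesis by auto
  next
    assume "wbr (v # u) (y # w) z \<noteq> (0::'k)"
    with 3(2) show ?thesis by auto
  qed
qed

lemma wbr_fc: "wbr u w \<in> free_carrier"
proof -
  have "{z. wbr u w z \<noteq> (0::'k::field)} \<subseteq> {z. set z \<subseteq> set u \<union> set w \<and> length z = length u + length w}"
    using wbr_supp by blast
  moreover have "finite {z. set z \<subseteq> set u \<union> set w \<and> length z = length u + length w}"
    by (rule finite_lists_length_eq) simp
  ultimately have f: "finite {z. wbr u w z \<noteq> (0::'k::field)}" by (rule finite_subset)
  have "wbr u w [] = (0::'k::field)"
  proof (rule ccontr)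
    assume "wbr u w [] \<noteq> (0::'k::field)"
    from wbr_supp[OF this] have "w = []" by simp
    with \<open>wbr u w [] \<noteq> 0\<close> show False by simp
  qed
  with f show ?thesis by (simp add: free_carrier_def)
qed

lemma dl_fc: "v \<noteq> [] \<Longrightarrow> dl v \<in> free_carrier"
  by (auto simp: free_carrier_def dl_def)

lemma wbr_single: "wbr u [v] = dl (v # u)"
  by (simp add: dl_def)

lemma fc_nil: "c \<in> free_carrier \<Longrightarrow> c w \<noteq> 0 \<Longrightarrow> w \<noteq> []"
  by (auto simp: free_carrier_def)

lemma fc_fin: "c \<in> free_carrier \<Longrightarrow> finite {w. c w \<noteq> 0}"
  by (auto simp: free_carrier_def)

lemma app_lc:
  assumes X: "X \<in> free_carrier"
  shows "app_letter v X = lc fscale (\<lambda>w. dl (v # w)) X"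
proof
  fix z
  have "lc fscale (\<lambda>w. dl (v # w)) X z = (\<Sum>w\<in>{w. X w \<noteq> 0}. X w * (if z = v # w then 1 else 0))"
    unfolding lc_def sum_apply_fun by (simp add: fscale_def dl_def)
  also have "\<dots> = app_letter v X z"
  proof (cases z)
    case Nil then show ?thesis by (simp add: app_letter_def)
  next
    case (Cons v' z')
    show ?thesis
    proof (cases "v' = v")
      case True
      have "(\<Sum>w\<in>{w. X w \<noteq> 0}. X w * (if z = v # w then 1 else 0)) =
            (\<Sum>w\<in>{w. X w \<noteq> 0}. if w = z' then X w else 0)"
        using Cons True by (intro sum.cong) auto
      also have "\<dots> = X z'" by (simp add: sum.delta' fc_fin[OF X])
      finally show ?thesis using Cons True by (simp add: app_letter_def)
    next
      case False then show ?thesis using Cons by (simp add: app_letter_def)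
    qed
  qed
  finally show "app_letter v X z = lc fscale (\<lambda>w. dl (v # w)) X z" by simp
qed

lemma fbr_lc: "fbr c d = lc fscale (\<lambda>u. lc fscale (wbr u) d) c"
proof
  fix z
  show "fbr c d z = lc fscale (\<lambda>u. lc fscale (wbr u) d) c z"
    unfolding fbr_def lc_def sum_apply_fun
    by (simp add: fscale_def sum_apply_fun sum_distrib_left mult.assoc)
qed

lemma fbr_fc: "fbr c d \<in> free_carrier"
  unfolding fbr_lc
  by (intro lc_in[OF mod_fscale sub_fc] wbr_fc)

lemma lc_dl_self: "c \<in> free_carrier \<Longrightarrow> lc fscale dl c = c"
proof
  fix z assume c: "c \<in> free_carrier"
  have "lc fscale dl c z = (\<Sum>w\<in>{w. c w \<noteq> 0}. if w = z then c w else 0)"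
    unfolding lc_def sum_apply_fun by (intro sum.cong) (auto simp: fscale_def dl_def)
  also have "\<dots> = c z" by (simp add: sum.delta' fc_fin[OF c])
  finally show "lc fscale dl c z = c z" .
qed

definition PhiM :: "('x \<Rightarrow> 'y) \<Rightarrow> ('x list \<Rightarrow> 'k::field) \<Rightarrow> ('y list \<Rightarrow> 'k)" where
  "PhiM f c = lc fscale (\<lambda>w. dl (map f w)) c"

lemma Phi_fc: "c \<in> free_carrier \<Longrightarrow> PhiM f c \<in> free_carrier"
  unfolding PhiM_def
  by (intro lc_in[OF mod_fscale sub_fc] dl_fc) (auto dest: fc_nil)

lemma Phi_lin: "lin_on fscale fscale free_carrier (PhiM f)"
  unfolding PhiM_def by (rule lin_on_lc[OF mod_fscale])

lemma Phi_dl: "PhiM f (dl v) = dl (map f v)"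
  unfolding PhiM_def by (rule lc_dl[OF mod_fscale])

lemma Phi_cv:
  assumes m: "module s" and c: "c \<in> free_carrier"
  shows "lc s K (PhiM f c) = lc s (\<lambda>w. K (map f w)) c"
proof -
  have "lc s K (PhiM f c) = lc s (\<lambda>w. lc s K (dl (map f w))) c"
    unfolding PhiM_def
    by (rule lc_T[OF mod_fscale sub_fc lin_on_lc[OF m]]) (auto intro: dl_fc dest: fc_nil[OF c])
  also have "\<dots> = lc s (\<lambda>w. K (map f w)) c" by (simp add: lc_dl[OF m])
  finally show ?thesis .
qed

lemma Phi_app:
  assumes X: "X \<in> free_carrier"
  shows "PhiM f (app_letter v X) = app_letter (f v) (PhiM f X)"
proof -
  have "PhiM f (app_letter v X) = lc fscale (\<lambda>w. PhiM f (dl (v # w))) X"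
    unfolding app_lc[OF X]
    by (rule lc_T[OF mod_fscale sub_fc Phi_lin]) (auto intro: dl_fc)
  also have "\<dots> = lc fscale (\<lambda>w. dl (f v # map f w)) X" by (simp add: Phi_dl)
  also have "\<dots> = app_letter (f v) (PhiM f X)"
    unfolding app_lc[OF Phi_fc[OF X]] Phi_cv[OF mod_fscale X] by simp
  finally show ?thesis .
qed

lemma app_fc: "X \<in> free_carrier \<Longrightarrow> app_letter v X \<in> free_carrier"
  unfolding app_lc by (intro lc_in[OF mod_fscale sub_fc] dl_fc) auto

lemma wbr3: "wbr u (v # y # w) = app_letter v (wbr u (y # w)) - wbr (v # u) (y # w)"
  by (rule ext) simp

lemma Phi_wbr: "PhiM f (wbr u w :: _ \<Rightarrow> 'k::field) = wbr (map f u) (map f w)"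
proof (induct u w rule: wbr.induct)
  case (1 u) then show ?case by (simp add: PhiM_def lc_def)
next
  case (2 u v) then show ?case by (simp only: wbr_single Phi_dl) (simp add: dl_def)
next
  case (3 u v y w)
  have "PhiM f (wbr u (v # y # w) :: _ \<Rightarrow> 'k) = PhiM f (app_letter v (wbr u (y # w))) - PhiM f (wbr (v # u) (y # w))"
    by (simp only: wbr3) (rule lin_on_diff[OF Phi_lin sub_fc mod_fscale app_fc wbr_fc, OF wbr_fc])
  also have "\<dots> = app_letter (f v) (wbr (map f u) (map f (y # w))) - wbr (map f (v # u)) (map f (y # w))"
    by (simp only: Phi_app[OF wbr_fc] 3)
  finally show ?case by (simp only: wbr3 list.map)
qed

lemma Phi_hom:
  assumes c: "c \<in> free_carrier" and d: "d \<in> free_carrier"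
  shows "PhiM f (fbr c d) = fbr (PhiM f c) (PhiM f d)"
proof -
  have "PhiM f (fbr c d) = lc fscale (\<lambda>u. PhiM f (lc fscale (wbr u) d)) c"
    unfolding fbr_lc
    by (rule lc_T[OF mod_fscale sub_fc Phi_lin]) (intro lc_in[OF mod_fscale sub_fc] wbr_fc)
  also have "\<dots> = lc fscale (\<lambda>u. lc fscale (\<lambda>w. wbr (map f u) (map f w)) d) c"
    by (subst lc_T[OF mod_fscale sub_fc Phi_lin]) (auto intro: wbr_fc simp: Phi_wbr)
  also have "\<dots> = fbr (PhiM f c) (PhiM f d)"
    unfolding fbr_lc Phi_cv[OF mod_fscale c] Phi_cv[OF mod_fscale d] ..
  finally show ?thesis .
qed



lemma leib_vs: "leibniz_algebra sc br \<Longrightarrow> vector_space sc"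
  by (simp add: leibniz_algebra_def)

lemma leib_mod: "leibniz_algebra sc br \<Longrightarrow> module sc"
  by (simp add: leibniz_algebra_def module_iff_vector_space)

lemma leib_linl: "leibniz_algebra sc br \<Longrightarrow> lin_on sc sc UNIV (\<lambda>x. br x y)"
  by (simp add: leibniz_algebra_def lin_on_def)

lemma leib_linr: "leibniz_algebra sc br \<Longrightarrow> lin_on sc sc UNIV (br x)"
  by (simp add: leibniz_algebra_def lin_on_def)

lemma leib_id: "leibniz_algebra sc br \<Longrightarrow> br x (br y z) = br (br x y) z - br (br x z) y"
  by (simp add: leibniz_algebra_def)

lemma lin_UNIV: "leibniz_algebra sc br \<Longrightarrow> module.subspace sc UNIV"
  using leib_mod module.subspace_UNIV by blast

lemma br_zero_r: "leibniz_algebra sc br \<Longrightarrow> br x 0 = 0"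
  using lin_on_zero[OF leib_linr lin_UNIV leib_mod] by blast

lemma linear_lin: "Vector_Spaces.linear s1 s2 f \<Longrightarrow> lin_on s1 s2 UNIV f"
  unfolding lin_on_def using module_hom_iff_linear[of s1 s2 f]
  by (metis module_hom.add module_hom.scale)

lemma proj_lc: "canon_proj sc br c = lc sc (lnorm br) c"
  by (simp add: canon_proj_def lc_def)

lemma proj_lin: "leibniz_algebra sc br \<Longrightarrow> lin_on fscale sc free_carrier (canon_proj sc br)"
  using lin_on_lc[OF leib_mod, of sc br "lnorm br"] proj_lc[of sc br]
  by (metis ext)

lemma proj_dl: "leibniz_algebra sc br \<Longrightarrow> canon_proj sc br (dl v) = lnorm br v"
  by (simp add: proj_lc lc_dl[OF leib_mod])

lemma proj_app:
  assumes L: "leibniz_algebra sc br" and X: "X \<in> free_carrier"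
  shows "canon_proj sc br (app_letter v X) = br (canon_proj sc br X) v"
proof -
  have "canon_proj sc br (app_letter v X) = lc sc (\<lambda>w. canon_proj sc br (dl (v # w))) X"
    unfolding app_lc[OF X]
    by (rule lc_T[OF mod_fscale sub_fc proj_lin[OF L]]) (auto intro: dl_fc)
  also have "\<dots> = lc sc (\<lambda>w. br (lnorm br w) v) X"
  proof (rule lc_cong)
    fix w assume "X w \<noteq> 0"
    then have "w \<noteq> []" using fc_nil[OF X] by blast
    then obtain y w' where "w = y # w'" by (cases w) auto
    then show "canon_proj sc br (dl (v # w)) = br (lnorm br w) v" by (simp add: proj_dl[OF L])
  qed
  also have "\<dots> = br (canon_proj sc br X) v"
    unfolding proj_lc
    by (rule lc_T[OF leib_mod[OF L] lin_UNIV[OF L] leib_linl[OF L], symmetric]) simp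
  finally show ?thesis .
qed

lemma proj_wbr:
  assumes L: "leibniz_algebra sc br"
  shows "u \<noteq> [] \<Longrightarrow> canon_proj sc br (wbr u w) = br (lnorm br u) (lnorm br w)"
proof (induct u w rule: wbr.induct)
  case (1 u) then show ?case
    by (simp add: canon_proj_def br_zero_r[OF L])
next
  case (2 u v)
  then obtain x u' where "u = x # u'" by (cases u) auto
  then show ?case by (simp only: wbr_single proj_dl[OF L]) simp
next
  case (3 u v y w)
  have "canon_proj sc br (wbr u (v # y # w)) =
      canon_proj sc br (app_letter v (wbr u (y # w))) - canon_proj sc br (wbr (v # u) (y # w))"
    by (simp only: wbr3) (rule lin_on_diff[OF proj_lin[OF L] sub_fc mod_fscale app_fc wbr_fc, OF wbr_fc])
  also have "\<dots> = br (br (lnorm br u) (lnorm br (y # w))) v - br (br (lnorm br u) v) (lnorm br (y # w))"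
    using 3 by (cases u) (simp_all add: proj_app[OF L wbr_fc])
  also have "\<dots> = br (lnorm br u) (br (lnorm br (y # w)) v)"
    by (simp add: leib_id[OF L])
  finally show ?case by (simp only: lnorm.simps)
qed

lemma proj_hom:
  assumes L: "leibniz_algebra sc br" and c: "c \<in> free_carrier" and d: "d \<in> free_carrier"
  shows "canon_proj sc br (fbr c d) = br (canon_proj sc br c) (canon_proj sc br d)"
proof -
  have "canon_proj sc br (fbr c d) = lc sc (\<lambda>u. canon_proj sc br (lc fscale (wbr u) d)) c"
    unfolding fbr_lc
    by (rule lc_T[OF mod_fscale sub_fc proj_lin[OF L]]) (intro lc_in[OF mod_fscale sub_fc] wbr_fc)
  also have "\<dots> = lc sc (\<lambda>u. lc sc (\<lambda>w. canon_proj sc br (wbr u w)) d) c"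
    by (subst lc_T[OF mod_fscale sub_fc proj_lin[OF L]]) (auto intro: wbr_fc)
  also have "\<dots> = lc sc (\<lambda>u. lc sc (\<lambda>w. br (lnorm br u) (lnorm br w)) d) c"
    by (intro lc_cong) (simp add: proj_wbr[OF L] fc_nil[OF c])
  also have "\<dots> = lc sc (\<lambda>u. br (lnorm br u) (canon_proj sc br d)) c"
    unfolding proj_lc
    by (intro lc_cong lc_T[OF leib_mod[OF L] lin_UNIV[OF L] leib_linr[OF L], symmetric]) simp
  also have "\<dots> = br (canon_proj sc br c) (canon_proj sc br d)"
    unfolding proj_lc[of sc br c]
    by (rule lc_T[OF leib_mod[OF L] lin_UNIV[OF L] leib_linl[OF L], symmetric]) simp
  finally show ?thesis .
qed

lemma lnorm_hom:
  assumes h: "leibniz_hom sc br sca bra f"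
  shows "f (lnorm br w) = lnorm bra (map f w)"
proof (induct w rule: induct_list012)
  case 1 then show ?case
    using h module_hom.zero[of sc sca f] by (simp add: leibniz_hom_def module_hom_iff_linear[symmetric])
qed (use h in \<open>auto simp: leibniz_hom_def\<close>)

lemma proj_Phi:
  assumes L: "leibniz_algebra sc br" and h: "leibniz_hom sc br sca bra f" and c: "c \<in> free_carrier"
  shows "canon_proj sca bra (PhiM f c) = f (canon_proj sc br c)"
proof -
  have lin: "Vector_Spaces.linear sc sca f" using h by (simp add: leibniz_hom_def)
  have ms: "module sca" using lin unfolding module_hom_iff_linear[symmetric] module_hom_def by blast
  have "canon_proj sca bra (PhiM f c) = lc sca (\<lambda>w. lnorm bra (map f w)) c"
    unfolding proj_lc Phi_cv[OF ms c] ..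
  also have "\<dots> = lc sca (\<lambda>w. f (lnorm br w)) c" by (simp add: lnorm_hom[OF h])
  also have "\<dots> = f (canon_proj sc br c)"
    unfolding proj_lc
    by (rule lc_T[OF leib_mod[OF L] lin_UNIV[OF L] linear_lin[OF lin], symmetric]) simp
  finally show ?thesis .
qed



lemma lin_span:
  assumes m1: "module s1" and m2: "module s2" and S: "module.subspace s1 S" and X: "X \<subseteq> S"
    and l: "lin_on s1 s2 S f"
  shows "f ` module.span s1 X \<subseteq> module.span s2 (f ` X)"
proof -
  let ?P = "{x \<in> S. f x \<in> module.span s2 (f ` X)}"
  have f0: "f 0 = 0" by (rule lin_on_zero[OF l S m1])
  have "module.subspace s1 ?P"
  proof (rule module.subspaceI[OF m1])
    show "0 \<in> ?P" using module.subspace_0[OF m1 S] f0 module.span_zero[OF m2] by simp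
  next
    fix x y assume "x \<in> ?P" "y \<in> ?P"
    then show "x + y \<in> ?P"
      using l module.subspace_add[OF m1 S] module.span_add[OF m2] unfolding lin_on_def by auto
  next
    fix c x assume "x \<in> ?P"
    then show "s1 c x \<in> ?P"
      using l module.subspace_scale[OF m1 S] module.span_scale[OF m2] unfolding lin_on_def by auto
  qed
  moreover have "X \<subseteq> ?P" using X module.span_superset[OF m2, of "f ` X"] by auto
  ultimately have "module.span s1 X \<subseteq> ?P" by (rule module.span_minimal[OF m1, rotated])
  then show ?thesis by auto
qed

lemma lin_image_sub:
  assumes m1: "module s1" and m2: "module s2" and S: "module.subspace s1 S" and TS: "T \<subseteq> S"
    and T: "module.subspace s1 T" and l: "lin_on s1 s2 S f"
  shows "module.subspace s2 (f ` T)"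
proof (rule module.subspaceI[OF m2])
  show "0 \<in> f ` T" using lin_on_zero[OF l S m1] module.subspace_0[OF m1 T] by force
next
  fix x y assume "x \<in> f ` T" "y \<in> f ` T"
  then obtain a b where "a \<in> T" "b \<in> T" "x = f a" "y = f b" by auto
  moreover have "a \<in> S" "b \<in> S" using \<open>a \<in> T\<close> \<open>b \<in> T\<close> TS by auto
  ultimately have "x + y = f (a + b)" "a + b \<in> T" using l module.subspace_add[OF m1 T] unfolding lin_on_def by auto
  then show "x + y \<in> f ` T" by auto
next
  fix c x assume "x \<in> f ` T"
  then obtain a where "a \<in> T" "x = f a" by auto
  moreover have "a \<in> S" using \<open>a \<in> T\<close> TS by auto
  ultimately have "s2 c x = f (s1 c a)" "s1 c a \<in> T" using l module.subspace_scale[OF m1 T] unfolding lin_on_def by auto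
  then show "s2 c x \<in> f ` T" by auto
qed

lemma qdim_le: "finite B \<Longrightarrow> B \<subseteq> U \<Longrightarrow> U \<subseteq> module.span s (B \<union> W) \<Longrightarrow> qdim s U W \<le> enat (card B)"
  unfolding qdim_def by (rule Inf_lower) blast

lemma qdim_wit:
  assumes "qdim s U W \<noteq> \<infinity>"
  shows "\<exists>B. finite B \<and> B \<subseteq> U \<and> U \<subseteq> module.span s (B \<union> W) \<and> qdim s U W = enat (card B)"
proof -
  let ?A = "{enat (card B) |B. finite B \<and> B \<subseteq> U \<and> U \<subseteq> module.span s (B \<union> W)}"
  have q: "qdim s U W = Inf ?A" by (simp add: qdim_def)
  have ne: "?A \<noteq> {}"
  proof
    assume "?A = {}"
    then have "qdim s U W = \<infinity>" unfolding q by (simp only: Inf_empty top_enat_def)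
    with assms show False by blast
  qed
  then have "Inf ?A = (LEAST x. x \<in> ?A)" unfolding Inf_enat_def by (rule if_not_P)
  moreover have "(LEAST x. x \<in> ?A) \<in> ?A" using ne by (auto intro: LeastI)
  ultimately show ?thesis using q by auto
qed

lemma qdim_map:
  assumes m1: "module s1" and m2: "module s2" and S: "module.subspace s1 S"
    and US: "U \<subseteq> S" and WS: "W \<subseteq> S" and l: "lin_on s1 s2 S f"
    and fU: "f ` U \<subseteq> U2" and U2f: "U2 \<subseteq> f ` U" and fW: "f ` W \<subseteq> W2"
  shows "qdim s2 U2 W2 \<le> qdim s1 U W"
proof (cases "qdim s1 U W = \<infinity>")
  case True then show ?thesis by (simp only: enat_ord_simps(3))
next
  case False
  obtain B where B: "finite B" "B \<subseteq> U" "U \<subseteq> module.span s1 (B \<union> W)" "qdim s1 U W = enat (card B)"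
    using qdim_wit[OF False] by blast
  have "U2 \<subseteq> f ` module.span s1 (B \<union> W)" using U2f B(3) by (meson image_mono order_trans)
  also have "\<dots> \<subseteq> module.span s2 (f ` (B \<union> W))"
    by (rule lin_span[OF m1 m2 S _ l]) (use B(2) US WS in blast)
  also have "\<dots> \<subseteq> module.span s2 (f ` B \<union> W2)"
    by (rule module.span_mono[OF m2]) (use fW in blast)
  finally have sp: "U2 \<subseteq> module.span s2 (f ` B \<union> W2)" .
  have "f ` B \<subseteq> U2" using B(2) fU by blast
  then have "qdim s2 U2 W2 \<le> enat (card (f ` B))"
    using qdim_le[OF finite_imageI[OF B(1)] _ sp] by blast
  also have "\<dots> \<le> enat (card B)" using card_image_le[OF B(1), of f] by (simp only: enat_ord_simps(1))
  finally show ?thesis using B(4) by (simp only:)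
qed

lemma qdim_tri:
  assumes m: "module s" and RU: "R \<subseteq> U" and W0: "W0 \<subseteq> W"
  shows "qdim s U W \<le> qdim s U R + qdim s R W0"
proof (cases "qdim s U R = \<infinity> \<or> qdim s R W0 = \<infinity>")
  case True then show ?thesis by (metis enat_ord_simps(3) plus_enat_simps(2) plus_enat_simps(3))
next
  case False
  then have f1: "qdim s U R \<noteq> \<infinity>" and f2: "qdim s R W0 \<noteq> \<infinity>" by auto
  obtain B1 where B1: "finite B1" "B1 \<subseteq> U" "U \<subseteq> module.span s (B1 \<union> R)" "qdim s U R = enat (card B1)"
    using qdim_wit[OF f1] by blast
  obtain B2 where B2: "finite B2" "B2 \<subseteq> R" "R \<subseteq> module.span s (B2 \<union> W0)" "qdim s R W0 = enat (card B2)"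
    using qdim_wit[OF f2] by blast
  let ?T = "module.span s (B1 \<union> B2 \<union> W)"
  have "R \<subseteq> ?T"
    using B2(3) module.span_mono[OF m, of "B2 \<union> W0" "B1 \<union> B2 \<union> W"] W0 by auto
  moreover have "B1 \<subseteq> ?T" using module.span_superset[OF m, of "B1 \<union> B2 \<union> W"] by auto
  ultimately have "module.span s (B1 \<union> R) \<subseteq> ?T"
    by (intro module.span_minimal[OF m]) (auto simp: module.subspace_span[OF m])
  then have "qdim s U W \<le> enat (card (B1 \<union> B2))"
    by (intro qdim_le) (use B1 B2 RU in \<open>auto simp: Un_assoc\<close>)
  also have "\<dots> \<le> enat (card B1 + card B2)" using card_Un_le[of B1 B2] by (simp only: enat_ord_simps(1))
  finally show ?thesis using B1(4) B2(4) by (simp only: plus_enat_simps(1))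
qed

lemma lie_mono: "module s \<Longrightarrow> M \<subseteq> M' \<Longrightarrow> N \<subseteq> N' \<Longrightarrow> lie_comm s br M N \<subseteq> lie_comm s br M' N'"
  unfolding lie_comm_def by (rule module.span_mono) blast+

lemma lie_fc: "lie_comm fscale fbr M N \<subseteq> free_carrier"
  unfolding lie_comm_def
  by (rule module.span_minimal[OF mod_fscale]) (auto intro: module.subspace_add[OF mod_fscale sub_fc] fbr_fc sub_fc)



lemma gens_fc: "M \<subseteq> free_carrier \<Longrightarrow> N \<subseteq> free_carrier \<Longrightarrow>
  {fbr m n + fbr n m | m n. m \<in> M \<and> n \<in> N} \<subseteq> (free_carrier :: ('x list \<Rightarrow> 'k::field) set)"
  using module.subspace_add[OF mod_fscale sub_fc] fbr_fc by blast

lemma Phi_lie: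
  assumes "M \<subseteq> free_carrier" "N \<subseteq> free_carrier" "PhiM f ` M \<subseteq> M2" "PhiM f ` N \<subseteq> N2"
  shows "PhiM f ` lie_comm fscale fbr M N \<subseteq> lie_comm fscale fbr M2 (N2 :: ('y list \<Rightarrow> 'k::field) set)"
proof -
  have "PhiM f ` lie_comm fscale fbr M N \<subseteq> module.span fscale (PhiM f ` {fbr m n + fbr n m | m n. m \<in> M \<and> n \<in> N})"
    unfolding lie_comm_def
    by (rule lin_span[OF mod_fscale mod_fscale sub_fc gens_fc[OF assms(1,2)] Phi_lin])
  also have "\<dots> \<subseteq> lie_comm fscale fbr M2 N2"
    unfolding lie_comm_def
  proof (rule module.span_mono[OF mod_fscale], rule subsetI)
    fix z assume "z \<in> PhiM f ` {fbr m n + fbr n m | m n. m \<in> M \<and> n \<in> N}"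
    then obtain m n where mn: "m \<in> M" "n \<in> N" "z = PhiM f (fbr m n + fbr n m)" by blast
    have "z = PhiM f (fbr m n) + PhiM f (fbr n m)"
      using Phi_lin fbr_fc mn(3) unfolding lin_on_def by blast
    also have "\<dots> = fbr (PhiM f m) (PhiM f n) + fbr (PhiM f n) (PhiM f m)"
      using mn assms by (simp add: Phi_hom subset_iff)
    finally show "z \<in> {fbr m n + fbr n m | m n. m \<in> M2 \<and> n \<in> N2}"
      using mn assms by blast
  qed
  finally show ?thesis .
qed

lemma proj_lie:
  assumes L: "leibniz_algebra sc br" and "M \<subseteq> free_carrier" "N \<subseteq> free_carrier"
  shows "canon_proj sc br ` lie_comm fscale fbr M N \<subseteq> lie_comm sc br UNIV UNIV"
proof -
  have "canon_proj sc br ` lie_comm fscale fbr M N \<subseteq> module.span sc (canon_proj sc br ` {fbr m n + fbr n m | m n. m \<in> M \<and> n \<in> N})"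
    unfolding lie_comm_def
    by (rule lin_span[OF mod_fscale leib_mod[OF L] sub_fc gens_fc[OF assms(2,3)] proj_lin[OF L]])
  also have "\<dots> \<subseteq> lie_comm sc br UNIV UNIV"
    unfolding lie_comm_def
  proof (rule module.span_mono[OF leib_mod[OF L]], rule subsetI)
    fix z assume "z \<in> canon_proj sc br ` {fbr m n + fbr n m | m n. m \<in> M \<and> n \<in> N}"
    then obtain m n where mn: "m \<in> M" "n \<in> N" "z = canon_proj sc br (fbr m n + fbr n m)" by blast
    have "z = canon_proj sc br (fbr m n) + canon_proj sc br (fbr n m)"
      using proj_lin[OF L] fbr_fc mn(3) unfolding lin_on_def by blast
    also have "\<dots> = br (canon_proj sc br m) (canon_proj sc br n) + br (canon_proj sc br n) (canon_proj sc br m)"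
      using mn assms by (simp add: proj_hom[OF L] subset_iff)
    finally show "z \<in> {br m n + br n m | m n. m \<in> UNIV \<and> n \<in> UNIV}"
      by blast
  qed
  finally show ?thesis .
qed

lemma lie_sub: "module s \<Longrightarrow> module.subspace s (lie_comm s br M N)"
  unfolding lie_comm_def by (rule module.subspace_span)

lemma proj_onto:
  fixes sc :: "'k::field \<Rightarrow> 'g::ab_group_add \<Rightarrow> 'g"
  assumes L: "leibniz_algebra sc br"
  shows "lie_comm sc br UNIV UNIV \<subseteq> canon_proj sc br ` lie_comm fscale fbr free_carrier free_carrier"
  unfolding lie_comm_def[of sc br]
proof (rule module.span_minimal[OF leib_mod[OF L]])
  show "module.subspace sc (canon_proj sc br ` lie_comm fscale fbr free_carrier free_carrier)"
    by (rule lin_image_sub[OF mod_fscale leib_mod[OF L] sub_fc lie_fc lie_sub[OF mod_fscale] proj_lin[OF L]])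
next
  show "{br m n + br n m |m n. m \<in> UNIV \<and> n \<in> UNIV} \<subseteq> canon_proj sc br ` lie_comm fscale fbr free_carrier free_carrier"
  proof (rule subsetI)
    fix z assume "z \<in> {br m n + br n m |m n. m \<in> UNIV \<and> n \<in> UNIV}"
    then obtain m n where z: "z = br m n + br n m" by blast
    let ?m = "dl [m] :: 'g list \<Rightarrow> 'k" and ?n = "dl [n] :: 'g list \<Rightarrow> 'k"
    have fm: "?m \<in> free_carrier" "?n \<in> free_carrier" by (auto intro: dl_fc)
    have pm: "canon_proj sc br ?m = m" "canon_proj sc br ?n = n" by (simp_all add: proj_dl[OF L])
    have "canon_proj sc br (fbr ?m ?n + fbr ?n ?m) = canon_proj sc br (fbr ?m ?n) + canon_proj sc br (fbr ?n ?m)"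
      using proj_lin[OF L] fbr_fc unfolding lin_on_def by blast
    also have "\<dots> = z" using z pm by (simp add: proj_hom[OF L fm] proj_hom[OF L fm(2) fm(1)])
    finally have e: "canon_proj sc br (fbr ?m ?n + fbr ?n ?m) = z" .
    have "fbr ?m ?n + fbr ?n ?m \<in> lie_comm fscale fbr free_carrier free_carrier"
      unfolding lie_comm_def using fm by (intro module.span_base[OF mod_fscale]) blast
    with e show "z \<in> canon_proj sc br ` lie_comm fscale fbr free_carrier free_carrier" by blast
  qed
qed

lemma Phi_inv:
  assumes s: "surj f" and y: "y \<in> free_carrier"
  shows "PhiM f (PhiM (inv f) y) = y" "PhiM (inv f) y \<in> free_carrier"
proof -
  show "PhiM (inv f) y \<in> free_carrier" by (rule Phi_fc[OF y])
  have "PhiM f (PhiM (inv f) y) = lc fscale (\<lambda>w. dl (map f w)) (PhiM (inv f) y)"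
    by (rule PhiM_def)
  also have "\<dots> = lc fscale (\<lambda>w. dl (map f (map (inv f) w))) y"
    by (rule Phi_cv[OF mod_fscale y])
  also have "\<dots> = lc fscale dl y"
    using s by (simp add: surj_f_inv_f map_idI)
  also have "\<dots> = y" by (rule lc_dl_self[OF y])
  finally show "PhiM f (PhiM (inv f) y) = y" .
qed

lemma Phi_onto:
  fixes f :: "'x \<Rightarrow> 'y"
  assumes s: "surj f"
  shows "lie_comm fscale fbr free_carrier (free_carrier :: ('y list \<Rightarrow> 'k::field) set) \<subseteq> PhiM f ` lie_comm fscale fbr free_carrier (free_carrier :: ('x list \<Rightarrow> 'k::field) set)"
proof -
  let ?L = "lie_comm fscale fbr free_carrier (free_carrier :: ('x list \<Rightarrow> 'k::field) set)"
  have sub: "module.subspace fscale (PhiM f ` ?L)"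
    by (rule lin_image_sub[OF mod_fscale mod_fscale sub_fc lie_fc lie_sub[OF mod_fscale] Phi_lin])
  have gens: "{fbr m n + fbr n m |m n. m \<in> free_carrier \<and> n \<in> (free_carrier :: ('y list \<Rightarrow> 'k) set)} \<subseteq> PhiM f ` ?L"
  proof (rule subsetI)
    fix z assume "z \<in> {fbr m n + fbr n m |m n. m \<in> free_carrier \<and> n \<in> (free_carrier :: ('y list \<Rightarrow> 'k) set)}"
    then obtain m n :: "'y list \<Rightarrow> 'k" where z: "z = fbr m n + fbr n m" and mn: "m \<in> free_carrier" "n \<in> free_carrier" by blast
    let ?m = "PhiM (inv f) m :: 'x list \<Rightarrow> 'k" and ?n = "PhiM (inv f) n :: 'x list \<Rightarrow> 'k"
    have fm: "?m \<in> free_carrier" "?n \<in> free_carrier" using Phi_inv[OF s] mn by auto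
    have pm: "PhiM f ?m = m" "PhiM f ?n = n" using Phi_inv[OF s] mn by auto
    have "PhiM f (fbr ?m ?n + fbr ?n ?m) = PhiM f (fbr ?m ?n) + PhiM f (fbr ?n ?m)"
      using Phi_lin fbr_fc unfolding lin_on_def by blast
    also have "\<dots> = z" using z pm by (simp add: Phi_hom[OF fm] Phi_hom[OF fm(2) fm(1)])
    finally have e: "PhiM f (fbr ?m ?n + fbr ?n ?m) = z" .
    have "fbr ?m ?n + fbr ?n ?m \<in> ?L"
      unfolding lie_comm_def using fm by (intro module.span_base[OF mod_fscale]) blast
    with e show "z \<in> PhiM f ` ?L" by blast
  qed
  have "module.span fscale {fbr m n + fbr n m |m n. m \<in> free_carrier \<and> n \<in> (free_carrier :: ('y list \<Rightarrow> 'k) set)} \<subseteq> PhiM f ` ?L"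
    by (rule module.span_minimal[OF mod_fscale gens sub])
  then show ?thesis by (simp only: lie_comm_def)
qed



theorem mainTheorem4:
  fixes sc :: "'k::field \<Rightarrow> 'g::ab_group_add \<Rightarrow> 'g" and br :: "'g \<Rightarrow> 'g \<Rightarrow> 'g"
    and sca :: "'k \<Rightarrow> 'a::ab_group_add \<Rightarrow> 'a" and bra :: "'a \<Rightarrow> 'a \<Rightarrow> 'a"
    and b :: "'g set" and \<phi> :: "'g \<Rightarrow> 'a"
  assumes char: "(2::'k) \<noteq> 0"
    and g: "leibniz_algebra sc br" and fin: "finite_dim sc"
    and a: "leibniz_algebra sca bra"
    and ideal: "two_sided_ideal sc br b"
    and hom: "leibniz_hom sc br sca bra \<phi>" and onto: "surj \<phi>"
    and ker: "{x. \<phi> x = 0} = b"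
  shows "schur_lie_dim sca bra
           \<le> schur_lie_dim sc br + qdim sc (lie_comm sc br UNIV UNIV \<inter> b) {0}"
proof -
  let ?Fg = "free_carrier :: ('g list \<Rightarrow> 'k) set"
  let ?Fa = "free_carrier :: ('a list \<Rightarrow> 'k) set"
  let ?pg = "canon_proj sc br" and ?pa = "canon_proj sca bra"
  let ?P = "PhiM \<phi> :: ('g list \<Rightarrow> 'k) \<Rightarrow> ('a list \<Rightarrow> 'k)"
  let ?r = "canon_rel sc br" and ?s = "canon_rel sca bra"
  let ?t = "{c \<in> ?Fg. \<phi> (?pg c) = 0}"
  let ?Lg = "lie_comm fscale fbr ?Fg ?Fg" and ?La = "lie_comm fscale fbr ?Fa ?Fa"
  let ?U = "?t \<inter> ?Lg" and ?W = "lie_comm fscale fbr ?Fg ?t"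
  let ?R = "?r \<inter> ?Lg" and ?Wr = "lie_comm fscale fbr ?Fg ?r"
  let ?Lgg = "lie_comm sc br UNIV UNIV"
  have phi0: "\<phi> 0 = 0" using ker ideal
    by (metis hom leibniz_hom_def module_hom.zero module_hom_iff_linear)
  have tts: "?P ` ?t \<subseteq> ?s"
    using Phi_fc proj_Phi[OF g hom] by (auto simp: canon_rel_def)
  have Ps: "?P ` ?Fg \<subseteq> ?Fa" using Phi_fc by blast
  have rst: "?r \<subseteq> ?t" using phi0 by (auto simp: canon_rel_def)
  have sFg: "?t \<subseteq> ?Fg" by blast
  have rFg: "?r \<subseteq> ?Fg" by (auto simp: canon_rel_def)
  have LgFg: "?Lg \<subseteq> ?Fg" by (rule lie_fc)
  have step1: "schur_lie_dim sca bra \<le> qdim fscale ?U ?W"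
    unfolding schur_lie_dim_def
  proof (rule qdim_map[OF mod_fscale mod_fscale sub_fc _ lie_fc Phi_lin])
    show "?U \<subseteq> ?Fg" by blast
    show "?P ` ?U \<subseteq> ?s \<inter> ?La"
      using tts Phi_lie[OF subset_refl subset_refl Ps Ps] by blast
    show "?P ` ?W \<subseteq> lie_comm fscale fbr ?Fa ?s"
      by (rule Phi_lie[OF subset_refl sFg Ps tts])
    show "?s \<inter> ?La \<subseteq> ?P ` ?U"
    proof
      fix y assume y: "y \<in> ?s \<inter> ?La"
      then obtain x where x: "x \<in> ?Lg" "y = ?P x" using Phi_onto[OF onto] by blast
      have xF: "x \<in> ?Fg" using x LgFg by blast
      have "\<phi> (?pg x) = ?pa (?P x)" using proj_Phi[OF g hom xF] by simp
      also have "\<dots> = 0" using y x by (simp add: canon_rel_def)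
      finally show "y \<in> ?P ` ?U" using x xF by blast
    qed
  qed
  have step2: "qdim fscale ?U ?W \<le> qdim fscale ?U ?R + qdim fscale ?R ?Wr"
    by (rule qdim_tri[OF mod_fscale]) (use rst in \<open>blast\<close>, rule lie_mono[OF mod_fscale subset_refl rst])
  have step3: "qdim fscale ?U ?R \<le> qdim sc (?Lgg \<inter> b) {0}"
  proof (cases "qdim sc (?Lgg \<inter> b) {0} = \<infinity>")
    case True then show ?thesis by (simp only: enat_ord_simps(3))
  next
    case False
    obtain B where B: "finite B" "B \<subseteq> ?Lgg \<inter> b" "?Lgg \<inter> b \<subseteq> module.span sc (B \<union> {0})"
        "qdim sc (?Lgg \<inter> b) {0} = enat (card B)"
      using qdim_wit[OF False] by blast
    have ex: "\<exists>x. x \<in> ?Lg \<and> ?pg x = v" if "v \<in> ?Lgg" for v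
      using proj_onto[OF g] that by blast
    define pre where "pre v = (SOME x. x \<in> ?Lg \<and> ?pg x = v)" for v
    have pre: "pre v \<in> ?Lg" "?pg (pre v) = v" if "v \<in> B" for v
      using someI_ex[OF ex[of v]] that B(2) unfolding pre_def by auto
    let ?B = "pre ` B"
    have BL: "?B \<subseteq> ?Lg" using pre by blast
    have BU: "?B \<subseteq> ?U"
    proof
      fix x assume "x \<in> ?B"
      then obtain v where v: "v \<in> B" "x = pre v" by blast
      have "\<phi> v = 0" using v B(2) ker by blast
      moreover have "pre v \<in> ?Fg" using pre(1)[OF v(1)] LgFg by blast
      ultimately show "x \<in> ?U" using pre[OF v(1)] v by simp
    qed
    have spB: "module.span fscale ?B \<subseteq> ?Lg"
      by (rule module.span_minimal[OF mod_fscale BL lie_sub[OF mod_fscale]])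
    have spBF: "module.span fscale ?B \<subseteq> ?Fg" using spB LgFg by blast
    have img: "module.span sc (B \<union> {0}) \<subseteq> ?pg ` module.span fscale ?B"
    proof (rule module.span_minimal[OF leib_mod[OF g]])
      show "module.subspace sc (?pg ` module.span fscale ?B)"
        by (rule lin_image_sub[OF mod_fscale leib_mod[OF g] sub_fc spBF module.subspace_span[OF mod_fscale] proj_lin[OF g]])
      have "0 \<in> ?pg ` module.span fscale ?B"
        using lin_on_zero[OF proj_lin[OF g] sub_fc mod_fscale] module.span_zero[OF mod_fscale] by force
      moreover have "B \<subseteq> ?pg ` module.span fscale ?B"
        using pre module.span_superset[OF mod_fscale, of ?B] by force
      ultimately show "B \<union> {0} \<subseteq> ?pg ` module.span fscale ?B" by blast
    qed
    have "?U \<subseteq> module.span fscale (?B \<union> ?R)"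
    proof
      fix x assume x: "x \<in> ?U"
      have xF: "x \<in> ?Fg" and xL: "x \<in> ?Lg" using x by auto
      have "?pg x \<in> ?Lgg" using proj_lie[OF g subset_refl subset_refl] xL by blast
      moreover have "?pg x \<in> b" using x ker by blast
      ultimately have "?pg x \<in> ?pg ` module.span fscale ?B" using B(3) img by blast
      then obtain x' where x': "x' \<in> module.span fscale ?B" "?pg x' = ?pg x" by (metis imageE)
      have x'F: "x' \<in> ?Fg" and x'L: "x' \<in> ?Lg" using x' spB spBF by auto
      let ?d = "x - x'"
      have dF: "?d \<in> ?Fg" by (rule module.subspace_diff[OF mod_fscale sub_fc xF x'F])
      have dL: "?d \<in> ?Lg" by (rule module.subspace_diff[OF mod_fscale lie_sub[OF mod_fscale] xL x'L])
      have "?pg ?d = ?pg x - ?pg x'" by (rule lin_on_diff[OF proj_lin[OF g] sub_fc mod_fscale xF x'F])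
      then have "?pg ?d = 0" using x' by simp
      then have dR: "?d \<in> ?R" using dF dL by (simp add: canon_rel_def)
      have "x' \<in> module.span fscale (?B \<union> ?R)"
        using x'(1) module.span_mono[OF mod_fscale, of ?B "?B \<union> ?R"] by blast
      moreover have "?d \<in> module.span fscale (?B \<union> ?R)"
        using dR module.span_superset[OF mod_fscale, of "?B \<union> ?R"] by blast
      ultimately have "x' + ?d \<in> module.span fscale (?B \<union> ?R)" by (rule module.span_add[OF mod_fscale])
      then show "x \<in> module.span fscale (?B \<union> ?R)" by simp
    qed
    then have "qdim fscale ?U ?R \<le> enat (card ?B)"
      using qdim_le[OF finite_imageI[OF B(1)] BU] by blast
    also have "\<dots> \<le> enat (card B)" using card_image_le[OF B(1), of pre] by (simp only: enat_ord_simps(1))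
    finally show ?thesis using B(4) by (simp only:)
  qed
  have "schur_lie_dim sc br = qdim fscale ?R ?Wr" by (simp only: schur_lie_dim_def)
  have "schur_lie_dim sca bra \<le> qdim fscale ?U ?R + qdim fscale ?R ?Wr"
    using step1 step2 by (rule order_trans)
  also have "\<dots> \<le> qdim sc (?Lgg \<inter> b) {0} + qdim fscale ?R ?Wr"
    by (rule add_right_mono[OF step3])
  also have "\<dots> = schur_lie_dim sc br + qdim sc (?Lgg \<inter> b) {0}"
    by (simp only: schur_lie_dim_def add.commute)
  finally show ?thesis .
qed

end
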